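(* For every integer $n\geq 2$, $$\sum_{k=1}^{n-1}\frac{B_{2k}B_{2n-2k}}{(2k)(2n-2k)}=\frac1n\sum_{k=1}^{n-1}\frac{B_{2k}B_{2n-2k}}{2k}\binom{2n}{2k}+\frac{B_{2n}}{n}H_{2n}=\frac1n\sum_{k=1}^{n}\frac{B_{2k}B_{2n-2k}}{2k}\binom{2n}{2k}+\frac{B_{2n}}{n}H_{2n-1}.$$
   Context: $B_n$ denotes the Bernoulli numbers, defined by $\frac{x}{e^x-1}=\sum_{n\ge 0}B_n\frac{x^n}{n!}$ (so $B_0=1$). $H_i=\sum_{j=1}^i \frac1j$ is the $i$-th harmonic number. *)

theory Defs
  imports "HOL-Analysis.Analysis" "HOL-Computational_Algebra.Formal_Power_Series"
begin

definition bernoulli :: "nat \<Rightarrow> real" where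
  "bernoulli n = fact n * fps_nth ((fps_X :: real fps) / (fps_exp 1 - 1)) n"


end

theory Submission
  imports Defs
begin

unbundle no vec_syntax
unbundle fps_syntax


definition bfps :: "real fps" where "bfps = fps_X / (fps_exp 1 - 1)"

lemma bern_nth: "bfps $ k = bernoulli k / fact k"
  by (simp add: bernoulli_def bfps_def)

lemma E1_sub: "subdegree (fps_exp (1::real) - 1) = 1"
  by (rule subdegreeI) (auto simp: numeral_2_eq_2)

lemma bfps_mult: "bfps * (fps_exp 1 - 1) = fps_X"
proof -
  have "fps_exp (1::real) - 1 \<noteq> 0"
    by (metis E1_sub subdegree_0 zero_neq_one)
  then show ?thesis unfolding bfps_def
  proof (intro fps_times_divide_eq)
    have "subdegree (1 - fps_exp (1::real)) = 1" by (rule subdegreeI) (auto simp: numeral_2_eq_2)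
    then show "subdegree (fps_exp (1::real) - 1) \<le> subdegree (fps_X :: real fps)" by (simp add: E1_sub)
  qed auto
qed

lemma bfps_0: "bfps $ 0 = 1"
proof -
  have "(bfps * (fps_exp 1 - 1)) $ 1 = 1" by (simp add: bfps_mult)
  then show ?thesis by (simp add: fps_mult_nth_1)
qed

lemma bernoulli_0: "bernoulli 0 = 1"
  using bfps_0 bern_nth[of 0] by simp


definition negf :: "real fps \<Rightarrow> real fps" where
  "negf f = Abs_fps (\<lambda>k. (-1)^k * f $ k)"

lemma negf_nth: "negf f $ k = (-1)^k * f $ k" by (simp add: negf_def)

lemma negf_mult: "negf (f * g) = negf f * negf g"
proof (rule fps_ext)
  fix n
  have "negf (f * g) $ n = (\<Sum>i=0..n. ((-1)^i * f$i) * ((-1)^(n-i) * g$(n-i)))"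
    unfolding negf_nth fps_mult_nth sum_distrib_left
    by (intro sum.cong refl) (auto simp: power_add[symmetric] algebra_simps)
  then show "negf (f * g) $ n = (negf f * negf g) $ n"
    by (simp add: fps_mult_nth negf_nth)
qed

lemma negf_diff: "negf (f - g) = negf f - negf g"
  by (rule fps_ext) (simp add: negf_nth algebra_simps)

lemma negf_add: "negf (f + g) = negf f + negf g"
  by (rule fps_ext) (simp add: negf_nth algebra_simps)

lemma negf_one: "negf 1 = 1"
  by (rule fps_ext) (simp add: negf_nth)

lemma negf_X: "negf fps_X = - fps_X"
  by (rule fps_ext) (simp add: negf_nth)

lemma negf_exp: "negf (fps_exp 1) = fps_exp (-1)"
  by (rule fps_ext) (simp add: negf_nth)

lemma negf_bfps: "negf bfps = bfps + fps_X"
proof -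
  define E where "E = fps_exp (1::real)"
  define E' where "E' = fps_exp (-1::real)"
  have EE: "E * E' = 1" unfolding E_def E'_def
  proof -
    have "fps_exp (1::real) * fps_exp (-1) = fps_exp (1 + -1)" by (rule fps_exp_add_mult[symmetric])
    also have "\<dots> = 1" by (rule fps_ext) simp
    finally show "fps_exp (1::real) * fps_exp (-1) = 1" .
  qed
  have a: "negf bfps * (E' - 1) = - fps_X"
    using arg_cong[OF bfps_mult, of negf] unfolding negf_mult negf_diff negf_exp negf_one negf_X
      E'_def by simp
  have b: "(bfps + fps_X) * (E' - 1) = - fps_X"
  proof -
    have "(bfps + fps_X) * (E' - 1) = bfps * (E - 1) * (- E') + fps_X * (E' - 1)"
      using EE by (simp add: algebra_simps)
    also have "\<dots> = - fps_X" using bfps_mult unfolding E_def by (simp add: algebra_simps)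
    finally show ?thesis .
  qed
  have nz: "E' - 1 \<noteq> 0"
  proof
    assume "E' - 1 = 0"
    then have "(E' - 1) $ 1 = 0" by simp
    then show False unfolding E'_def by simp
  qed
  show ?thesis using a b nz by (metis mult_right_cancel)
qed

lemma bernoulli_odd: assumes "odd k" "k \<ge> 3" shows "bernoulli k = 0"
proof -
  have "negf bfps $ k = (bfps + fps_X) $ k" by (simp add: negf_bfps)
  then have "- bfps $ k = bfps $ k" using assms by (simp add: negf_nth)
  then have "bfps $ k = 0" by simp
  then show ?thesis by (simp add: bern_nth)
qed



definition Ip :: "real poly \<Rightarrow> real" where
  "Ip p = (\<Sum>i\<le>degree p. coeff p i / (real i + 1))"

lemma Ip_eq: assumes "degree p \<le> N" shows "Ip p = (\<Sum>i\<le>N. coeff p i / (real i + 1))"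
  unfolding Ip_def using assms
  by (intro sum.mono_neutral_left) (auto simp: coeff_eq_0)

lemma Ip_add: "Ip (p + q) = Ip p + Ip q"
proof -
  define N where "N = max (degree p) (degree q)"
  have "degree (p + q) \<le> N" unfolding N_def by (rule degree_add_le) auto
  then show ?thesis using Ip_eq[of p N] Ip_eq[of q N] Ip_eq[of "p+q" N]
    by (simp add: N_def add_divide_distrib sum.distrib)
qed

lemma Ip_smult: "Ip (smult c p) = c * Ip p"
proof -
  have "degree (smult c p) \<le> degree p" by simp
  then show ?thesis using Ip_eq[of "smult c p" "degree p"] Ip_eq[of p "degree p"]
    by (simp add: sum_distrib_left)
qed

lemma Ip_uminus: "Ip (- p) = - Ip p"
  using Ip_smult[of "-1" p] by simp

lemma Ip_diff: "Ip (p - q) = Ip p - Ip q"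
  using Ip_add[of p "-q"] Ip_uminus[of q] by simp

lemma Ip_zero: "Ip 0 = 0" by (simp add: Ip_def)

lemma Ip_sum: "Ip (\<Sum>i\<in>A. f i) = (\<Sum>i\<in>A. Ip (f i))"
  by (induction A rule: infinite_finite_induct) (auto simp: Ip_zero Ip_add)

abbreviation uu :: "real poly" where "uu \<equiv> [:0, 1:]"

lemma Ip_pow: "Ip (uu ^ i) = 1 / (real i + 1)"
proof -
  have "uu ^ i = monom 1 i" by (simp add: monom_altdef)
  moreover have "(\<Sum>ia\<le>i. (if i = ia then 1 else 0) / (real ia + 1)) = (\<Sum>ia\<le>i. if ia = i then 1 / (real ia + 1) else 0)"
    by (intro sum.cong) auto
  ultimately show ?thesis unfolding Ip_def by (simp add: degree_monom_eq coeff_monom)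
qed

lemma Ip_beta: "Ip (uu ^ i * (1 - uu) ^ j) = fact i * fact j / fact (i + j + 1)"
proof (induction j arbitrary: i)
  case 0
  then show ?case by (simp add: Ip_pow fact_Suc divide_simps)
next
  case (Suc j)
  have "uu ^ i * (1 - uu) ^ Suc j = uu ^ i * (1 - uu) ^ j - uu ^ Suc i * (1 - uu) ^ j"
    by (simp add: algebra_simps)
  then have "Ip (uu ^ i * (1 - uu) ^ Suc j) = fact i * fact j / fact (i + j + 1)
     - fact (Suc i) * fact j / fact (Suc i + j + 1)"
    by (simp only: Ip_diff Suc.IH)
  also have "\<dots> = fact i * fact (Suc j) / fact (i + Suc j + 1)"
  proof -
    define F where "F = (fact (i + j) :: real)"
    have F: "F > 0" unfolding F_def by simp
    have f1: "fact (i + j + 1) = (real i + real j + 1) * F" unfolding F_def by simp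
    have f2: "fact (Suc i + j + 1) = (real i + real j + 2) * (real i + real j + 1) * F"
      unfolding F_def by (simp add: algebra_simps)
    have f3: "fact (i + Suc j + 1) = (real i + real j + 2) * (real i + real j + 1) * F"
      unfolding F_def by (simp add: algebra_simps)
    have f4: "fact (Suc i) = (real i + 1) * fact i" "fact (Suc j) = (real j + 1) * fact j" by simp_all
    have a: "real i + real j + 1 \<noteq> 0" "real i + real j + 2 \<noteq> 0" "F \<noteq> 0" using F by linarith+
    show ?thesis unfolding f1 f2 f3 f4 using a by (simp add: divide_simps) (simp add: algebra_simps)
  qed
  finally show ?case .
qed

definition Sc :: "real poly \<Rightarrow> real fps \<Rightarrow> real poly fps" where
  "Sc p f = Abs_fps (\<lambda>k. smult (f $ k) (p ^ k))"

lemma Sc_nth: "Sc p f $ k = smult (f $ k) (p ^ k)" by (simp add: Sc_def)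

lemma Sc_mult: "Sc p (f * g) = Sc p f * Sc p g"
proof (rule fps_ext)
  fix n
  show "Sc p (f * g) $ n = (Sc p f * Sc p g) $ n"
    unfolding Sc_nth fps_mult_nth smult_sum
    by (intro sum.cong refl) (auto simp: power_add[symmetric] algebra_simps)
qed

lemma Sc_add: "Sc p (f + g) = Sc p f + Sc p g"
  by (rule fps_ext) (simp add: Sc_nth smult_add_left)

lemma Sc_diff: "Sc p (f - g) = Sc p f - Sc p g"
  by (rule fps_ext) (simp add: Sc_nth smult_diff_left)

lemma Sc_one: "Sc p 1 = 1"
  by (rule fps_ext) (simp add: Sc_nth)

lemma Sc_X: "Sc p fps_X = fps_const p * fps_X"
  by (rule fps_ext) (auto simp: Sc_nth le_Suc_eq)

lemma smult_sum_r: "smult c (sum f A) = sum (\<lambda>i. smult c (f i)) A"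
  by (induction A rule: infinite_finite_induct) (auto simp: smult_add_right)

lemma Sc_exp_aux: "i \<le> n \<Longrightarrow> smult (1 ^ i / of_nat (fact i)) (uu ^ i) * smult (1 ^ (n - i) / of_nat (fact (n - i))) ((1 - uu) ^ (n - i))
  = smult (1 / fact n) (of_nat (n choose i) * uu ^ i * (1 - uu) ^ (n - i))"
proof -
  assume i: "i \<le> n"
  have h: "(1::real) / (fact (n - i) * fact i) = real (n choose i) / fact n"
    using i by (simp add: binomial_fact field_simps)
  show ?thesis by (simp add: of_nat_poly smult_smult[symmetric] mult.assoc h)
qed

lemma Sc_exp: "Sc uu (fps_exp 1) * Sc (1 - uu) (fps_exp 1) = Sc 1 (fps_exp 1)"
proof (rule fps_ext)
  fix n
  have "(Sc uu (fps_exp 1) * Sc (1 - uu) (fps_exp 1)) $ n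
     = (\<Sum>i=0..n. smult (1 / fact n) (of_nat (n choose i) * uu ^ i * (1 - uu) ^ (n - i)))"
    unfolding fps_mult_nth Sc_nth fps_exp_nth
    by (intro sum.cong refl Sc_exp_aux) auto
  also have "\<dots> = smult (1 / fact n) ((uu + (1 - uu)) ^ n)"
    unfolding binomial_ring atLeast0AtMost by (simp add: smult_sum_r)
  also have "\<dots> = Sc 1 (fps_exp 1) $ n" by (simp add: Sc_nth)
  finally show "(Sc uu (fps_exp 1) * Sc (1 - uu) (fps_exp 1)) $ n = Sc 1 (fps_exp 1) $ n" .
qed



lemma Sc_bfps: "Sc p bfps * (Sc p (fps_exp 1) - 1) = fps_const p * fps_X"
  using arg_cong[OF bfps_mult, of "Sc p"] by (simp add: Sc_mult Sc_diff Sc_one Sc_X)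

lemma fps_ne0: "(f :: 'a::comm_ring_1 fps) $ n \<noteq> 0 \<Longrightarrow> f \<noteq> 0" by auto

lemma key_identity:
  "Sc uu bfps * Sc (1 - uu) bfps = Sc 1 bfps * (fps_const (uu * (1 - uu)) * fps_X
      + fps_const (1 - uu) * Sc uu bfps + fps_const uu * Sc (1 - uu) bfps)"
proof -
  define Ba where "Ba = Sc uu bfps"
  define Bc where "Bc = Sc (1 - uu) bfps"
  define Bz where "Bz = Sc 1 bfps"
  define Ea where "Ea = Sc uu (fps_exp 1)"
  define Ec where "Ec = Sc (1 - uu) (fps_exp 1)"
  define a where "a = fps_const uu"
  define c where "c = fps_const (1 - uu)"
  have ha: "Ba * (Ea - 1) = a * fps_X" unfolding Ba_def Ea_def a_def by (rule Sc_bfps)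
  have hc: "Bc * (Ec - 1) = c * fps_X" unfolding Bc_def Ec_def c_def by (rule Sc_bfps)
  have hz: "Bz * (Ea * Ec - 1) = fps_X" unfolding Bz_def Ea_def Ec_def Sc_exp
    using Sc_bfps[of 1] by simp
  have ac: "fps_const (uu * (1 - uu)) = a * c" unfolding a_def c_def by (simp add: fps_const_mult)
  have nz1: "Ea - 1 \<noteq> 0" unfolding Ea_def by (rule fps_ne0[of _ 1]) (simp add: Sc_nth)
  have nz2: "Ec - 1 \<noteq> 0" unfolding Ec_def 
  proof (rule fps_ne0[of _ 1])
    have "(1::real poly) - uu \<noteq> 0" by (metis coeff_pCons_0 diff_pCons one_pCons pCons_eq_0_iff zero_neq_one diff_0_right)
    then show "(Sc (1 - uu) (fps_exp 1) - 1) $ 1 \<noteq> 0" by (simp add: Sc_nth)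
  qed
  have nz3: "Ea * Ec - 1 \<noteq> 0" unfolding Ea_def Ec_def Sc_exp
    by (rule fps_ne0[of _ 1]) (simp add: Sc_nth)
  have "Ba * Bc * ((Ea - 1) * (Ec - 1) * (Ea * Ec - 1))
     = Bz * (a * c * fps_X + c * Ba + a * Bc) * ((Ea - 1) * (Ec - 1) * (Ea * Ec - 1))"
  proof -
    have "Ba * Bc * ((Ea - 1) * (Ec - 1) * (Ea * Ec - 1)) = (Ba * (Ea - 1)) * (Bc * (Ec - 1)) * (Ea * Ec - 1)"
      by (simp add: algebra_simps)
    also have "\<dots> = a * c * fps_X * fps_X * (Ea * Ec - 1)" unfolding ha hc by (simp add: algebra_simps)
    also have "\<dots> = (Bz * (Ea * Ec - 1)) * (a * c * fps_X * (Ea - 1) * (Ec - 1) + c * (Ba * (Ea - 1)) * (Ec - 1) + a * (Bc * (Ec - 1)) * (Ea - 1))"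
      unfolding hz ha hc by (simp add: algebra_simps)
    also have "\<dots> = Bz * (a * c * fps_X + c * Ba + a * Bc) * ((Ea - 1) * (Ec - 1) * (Ea * Ec - 1))"
      by (simp add: algebra_simps)
    finally show ?thesis .
  qed
  moreover have "(Ea - 1) * (Ec - 1) * (Ea * Ec - 1) \<noteq> 0" using nz1 nz2 nz3 by simp
  ultimately have "Ba * Bc = Bz * (a * c * fps_X + c * Ba + a * Bc)" by (rule mult_right_cancel[THEN iffD1, rotated])
  then show ?thesis unfolding Ba_def Bc_def Bz_def ac a_def c_def .
qed



definition Da :: "real poly fps" where
  "Da = Abs_fps (\<lambda>k. if k = 0 then 0 else smult (bfps $ k) (uu ^ (k - 1)))"
definition Qf :: "real poly fps" where
  "Qf = Abs_fps (\<lambda>k. smult (bfps $ k) (\<Sum>i<k. (1 - uu) ^ i))"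

lemma Da_eq: "fps_const uu * Da = Sc uu bfps - 1"
proof (rule fps_ext)
  fix n show "(fps_const uu * Da) $ n = (Sc uu bfps - 1) $ n"
    by (cases n) (simp_all add: Da_def Sc_nth bfps_0)
qed

lemma Qf_eq: "fps_const uu * Qf = Sc 1 bfps - Sc (1 - uu) bfps"
proof (rule fps_ext)
  fix n
  have "uu * (\<Sum>i<n. (1 - uu) ^ i) = 1 - (1 - uu) ^ n"
    using one_diff_power_eq[of "1 - uu" n] by simp
  then have "uu * smult (bfps $ n) (\<Sum>i<n. (1 - uu) ^ i) = smult (bfps $ n) 1 - smult (bfps $ n) ((1 - uu) ^ n)"
    by (metis mult_smult_right smult_diff_right)
  then show "(fps_const uu * Qf) $ n = (Sc 1 bfps - Sc (1 - uu) bfps) $ n"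
    by (simp add: Qf_def Sc_nth)
qed

lemma derived_identity:
  "Da * Sc (1 - uu) bfps - Qf = Sc 1 bfps * (fps_const (1 - uu) * fps_X + fps_const (1 - uu) * Da
     + (Sc (1 - uu) bfps - 1))"
proof -
  define Ba where "Ba = Sc uu bfps"
  define Bc where "Bc = Sc (1 - uu) bfps"
  define Bz where "Bz = Sc 1 bfps"
  define a where "a = fps_const uu"
  define c where "c = fps_const (1 - uu)"
  have ac1: "a + c = 1" unfolding a_def c_def by (simp add: fps_const_add[symmetric])
  have ac: "fps_const (uu * (1 - uu)) = a * c" unfolding a_def c_def by (simp add: fps_const_mult)
  have K: "Ba * Bc = Bz * (a * c * fps_X + c * Ba + a * Bc)"
    using key_identity unfolding Ba_def Bc_def Bz_def ac a_def c_def .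
  have D: "a * Da = Ba - 1" unfolding a_def Ba_def by (rule Da_eq)
  have Q: "a * Qf = Bz - Bc" unfolding a_def Bz_def Bc_def by (rule Qf_eq)
  have "a * (Da * Bc - Qf) = a * (Bz * (c * fps_X + c * Da + (Bc - 1)))"
  proof -
    have "a * (Da * Bc - Qf) = (a * Da) * Bc - a * Qf" by (simp add: algebra_simps)
    also have "\<dots> = Ba * Bc - Bz" unfolding D Q by (simp add: algebra_simps)
    also have "\<dots> = Bz * (a * c * fps_X + c * Ba + a * Bc - (a + c))" unfolding K ac1 by (simp add: algebra_simps)
    also have "\<dots> = Bz * (a * c * fps_X + c * (Ba - 1) + a * (Bc - 1))" by (simp add: algebra_simps)
    also have "\<dots> = a * (Bz * (c * fps_X + c * Da + (Bc - 1)))" unfolding D[symmetric] by (simp add: algebra_simps)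
    finally show ?thesis .
  qed
  moreover have "a \<noteq> 0" unfolding a_def by simp
  ultimately have "Da * Bc - Qf = Bz * (c * fps_X + c * Da + (Bc - 1))" by simp
  then show ?thesis unfolding Bc_def Bz_def c_def .
qed



definition gg :: "nat \<Rightarrow> real" where
  "gg k = (if k = 1 then 1/2 else 0) + (if k = 0 then 0 else bfps $ k / real k)"

lemma Ip_omp: "Ip ((1 - uu) ^ i) = 1 / (real i + 1)"
  using Ip_beta[of 0 i] by (simp add: fact_Suc)

lemma Ip_G: "Ip ((fps_const (1 - uu) * fps_X + fps_const (1 - uu) * Da + (Sc (1 - uu) bfps - 1)) $ k) = gg k"
proof (cases k)
  case 0 then show ?thesis by (simp add: gg_def Da_def Sc_nth bfps_0 Ip_zero one_pCons)
next
  case (Suc j)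
  have e: "(fps_const (1 - uu) * fps_X + fps_const (1 - uu) * Da + (Sc (1 - uu) bfps - 1)) $ k
     = (if k = 1 then uu ^ 0 * (1 - uu) ^ 1 else 0) + smult (bfps $ k) (uu ^ j * (1 - uu) ^ 1)
        + smult (bfps $ k) ((1 - uu) ^ k)"
    using Suc by (simp add: Da_def Sc_nth algebra_simps)
  have i1: "Ip (if k = 1 then uu ^ 0 * (1 - uu) ^ 1 else 0) = (if k = 1 then 1/2 else 0)"
    using Ip_beta[of 0 1] by (simp add: Ip_zero)
  have i2: "Ip (uu ^ j * (1 - uu) ^ 1) = 1 / ((real j + 1) * (real j + 2))"
  proof -
    have f: "(fact (j + 1 + 1) :: real) = (real j + 2) * (real j + 1) * fact j" by (simp add: algebra_simps)
    have "Ip (uu ^ j * (1 - uu) ^ 1) = fact j * fact 1 / fact (j + 1 + 1)" by (rule Ip_beta)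
    also have "\<dots> = (1 * fact j) / (((real j + 1) * (real j + 2)) * fact j)" unfolding f by (simp add: mult_ac)
    also have "\<dots> = 1 / ((real j + 1) * (real j + 2))" by (rule nonzero_mult_divide_mult_cancel_right) simp
    finally show ?thesis .
  qed
  have "1 / ((real j + 1) * (real j + 2)) + 1 / (real j + 1 + 1) = 1 / (real j + 1)"
  proof -
    have a: "real j + 1 \<noteq> 0" "real j + 2 \<noteq> 0" "real j + 1 + 1 \<noteq> 0" by linarith+
    show ?thesis using a by (simp add: divide_simps) (simp add: algebra_simps)
  qed
  then have "1 / ((real j + 1) * (real j + 2)) + 1 / (real (Suc j) + 1) = 1 / real (Suc j)" by simp
  then have "bfps $ k * (1 / ((real j + 1) * (real j + 2))) + bfps $ k * (1 / (real k + 1)) = bfps $ k / real k"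
    using Suc by (metis distrib_left times_divide_eq_right mult_1_right)
  then show ?thesis unfolding e Ip_add Ip_smult i1 i2 Ip_omp gg_def using Suc by simp
qed

lemma coeff_identity:
  "(\<Sum>i=0..m. (if i = 0 then 0 else bfps $ i * bfps $ (m - i) * fact (i - 1) * fact (m - i) / fact m))
     - bfps $ m * harm m = (\<Sum>i=0..m. bfps $ i * gg (m - i))"
proof -
  let ?G = "fps_const (1 - uu) * fps_X + fps_const (1 - uu) * Da + (Sc (1 - uu) bfps - 1)"
  have "Ip ((Da * Sc (1 - uu) bfps - Qf) $ m) = Ip ((Sc 1 bfps * ?G) $ m)"
    by (simp only: derived_identity)
  moreover have "Ip ((Da * Sc (1 - uu) bfps) $ m) =
     (\<Sum>i=0..m. (if i = 0 then 0 else bfps $ i * bfps $ (m - i) * fact (i - 1) * fact (m - i) / fact m))"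
    unfolding fps_mult_nth Ip_sum
  proof (intro sum.cong refl)
    fix i assume i: "i \<in> {0..m}"
    show "Ip (Da $ i * Sc (1 - uu) bfps $ (m - i)) =
      (if i = 0 then 0 else bfps $ i * bfps $ (m - i) * fact (i - 1) * fact (m - i) / fact m)"
    proof (cases i)
      case 0 then show ?thesis by (simp add: Da_def Ip_zero)
    next
      case (Suc j)
      then have "Da $ i * Sc (1 - uu) bfps $ (m - i) = smult (bfps $ i * bfps $ (m - i)) (uu ^ j * (1 - uu) ^ (m - i))"
        by (simp add: Da_def Sc_nth mult_ac)
      moreover have "j + (m - i) + 1 = m" using i Suc by simp
      ultimately show ?thesis using Suc Ip_beta[of j "m - i"] by (simp add: Ip_smult)
    qed
  qed
  moreover have "Ip (Qf $ m) = bfps $ m * harm m"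
    by (simp add: Qf_def Ip_smult Ip_sum Ip_omp harm_altdef field_simps)
  moreover have "Ip ((Sc 1 bfps * ?G) $ m) = (\<Sum>i=0..m. bfps $ i * gg (m - i))"
  proof -
    have h: "Sc 1 bfps $ i * P = smult (bfps $ i) P" for i P by (simp add: Sc_nth)
    show ?thesis unfolding fps_mult_nth Ip_sum h Ip_smult Ip_G ..
  qed
  ultimately show ?thesis by (simp add: Ip_diff)
qed



lemma sum_from1: "(\<Sum>i=1..(m::nat). f i) = (\<Sum>i=0..m. if i = 0 then 0 else (f i :: real))"
proof -
  have "(\<Sum>i=0..m. if i = 0 then 0 else f i) = (if (0::nat) = 0 then 0 else f 0) + (\<Sum>i=Suc 0..m. if i = 0 then 0 else f i)"
    by (rule sum.atLeast_Suc_atMost) simp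
  also have "(\<Sum>i=Suc 0..m. if i = 0 then 0 else f i) = (\<Sum>i=Suc 0..m. f i)" by (intro sum.cong) auto
  finally show ?thesis by simp
qed

lemma fact_pred: "i \<ge> 1 \<Longrightarrow> (fact i :: real) = real i * fact (i - 1)"
  by (cases i) auto

lemma miki_full:
  assumes m: "m \<ge> 1"
  shows "(\<Sum>i=1..m. bernoulli i * bernoulli (m - i) / real i) - bernoulli m * harm m
    = real m * bernoulli (m - 1) / 2 + (\<Sum>j=1..m. real (m choose j) * bernoulli j * bernoulli (m - j) / real j)"
proof -
  define B where "B = bernoulli"
  have beta: "bfps $ i = B i / fact i" for i by (simp add: bern_nth B_def)
  have CI: "((\<Sum>i=0..m. (if i = 0 then 0 else bfps $ i * bfps $ (m - i) * fact (i - 1) * fact (m - i) / fact m))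
     - bfps $ m * harm m) * fact m = (\<Sum>i=0..m. bfps $ i * gg (m - i)) * fact m"
    using coeff_identity by simp
  have L1: "(\<Sum>i=0..m. (if i = 0 then 0 else bfps $ i * bfps $ (m - i) * fact (i - 1) * fact (m - i) / fact m)) * fact m
     = (\<Sum>i=1..m. B i * B (m - i) / real i)"
    unfolding sum_from1 sum_distrib_right
  proof (intro sum.cong refl)
    fix i assume i: "i \<in> {0..m}"
    show "(if i = 0 then 0 else bfps $ i * bfps $ (m - i) * fact (i - 1) * fact (m - i) / fact m) * fact m =
         (if i = 0 then 0 else B i * B (m - i) / real i)"
    proof (cases "i = 0")
      case False
      then have "fact i = real i * fact (i - 1)" by (intro fact_pred) simp
      then show ?thesis using False by (simp add: beta field_simps)
    qed simp
  qed
  have L2: "bfps $ m * harm m * fact m = B m * harm m" by (simp add: beta)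
  have gsplit: "bfps $ i * gg (m - i) * fact m = (if i = m - 1 then B (m - 1) * real m / 2 else 0)
       + (if m - i = 0 then 0 else real (m choose (m - i)) * B (m - i) * B (m - (m - i)) / real (m - i))"
    if i: "i \<in> {0..m}" for i
  proof -
    have "bfps $ i * gg (m - i) * fact m = (if m - i = 1 then bfps $ i * fact m / 2 else 0)
       + (if m - i = 0 then 0 else bfps $ i * bfps $ (m - i) * fact m / real (m - i))"
      unfolding gg_def by (simp add: algebra_simps)
    also have "(if m - i = 1 then bfps $ i * fact m / 2 else 0) = (if i = m - 1 then B (m - 1) * real m / 2 else 0)"
    proof (cases "i = m - 1")
      case True
      then have "fact m = real m * fact (m - 1)" using m by (intro fact_pred) simp
      then show ?thesis using True m by (simp add: beta)
    qed (use i m in auto)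
    also have "(if m - i = 0 then 0 else bfps $ i * bfps $ (m - i) * fact m / real (m - i))
       = (if m - i = 0 then 0 else real (m choose (m - i)) * B (m - i) * B (m - (m - i)) / real (m - i))"
    proof (cases "m - i = 0")
      case False
      have "real (m choose (m - i)) = fact m / (fact (m - i) * fact (m - (m - i)))"
        by (rule binomial_fact) simp
      moreover have mi: "m - (m - i) = i" using i by simp
      ultimately have C: "real (m choose (m - i)) = fact m / (fact (m - i) * fact i)" by simp
      show ?thesis unfolding C mi using False by (simp add: beta field_simps)
    qed simp
    finally show ?thesis .
  qed
  have R: "(\<Sum>i=0..m. bfps $ i * gg (m - i)) * fact m
     = real m * B (m - 1) / 2 + (\<Sum>j=1..m. real (m choose j) * B j * B (m - j) / real j)"
  proof -
    have "(\<Sum>i=0..m. bfps $ i * gg (m - i)) * fact m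
       = (\<Sum>i=0..m. (if i = m - 1 then B (m - 1) * real m / 2 else 0))
       + (\<Sum>i=0..m. (if m - i = 0 then 0 else real (m choose (m - i)) * B (m - i) * B (m - (m - i)) / real (m - i)))"
      unfolding sum_distrib_right sum.distrib[symmetric] by (intro sum.cong refl gsplit)
    also have "(\<Sum>i=0..m. (if i = m - 1 then B (m - 1) * real m / 2 else 0)) = real m * B (m - 1) / 2"
      using m by (simp add: sum.delta')
    also have "(\<Sum>i=0..m. (if m - i = 0 then 0 else real (m choose (m - i)) * B (m - i) * B (m - (m - i)) / real (m - i)))
       = (\<Sum>j=0..m. (if j = 0 then 0 else real (m choose j) * B j * B (m - j) / real j))"
    proof -
      define h where "h = (\<lambda>j. (if j = 0 then 0 else real (m choose j) * B j * B (m - j) / real j))"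
      have "(\<Sum>j=0..m. h j) = (\<Sum>i=0..m. h (m + 0 - i))" by (rule sum.atLeastAtMost_rev)
      then have "(\<Sum>i=0..m. h (m - i)) = (\<Sum>j=0..m. h j)" by simp
      then show ?thesis unfolding h_def .
    qed
    also have "\<dots> = (\<Sum>j=1..m. real (m choose j) * B j * B (m - j) / real j)"
      by (rule sum_from1[symmetric])
    finally show ?thesis .
  qed
  have "(\<Sum>i=1..m. B i * B (m - i) / real i) - B m * harm m
     = real m * B (m - 1) / 2 + (\<Sum>j=1..m. real (m choose j) * B j * B (m - j) / real j)"
    using CI unfolding left_diff_distrib L1 L2 R .
  then show ?thesis unfolding B_def .
qed



lemma sum_last: "(n::nat) \<ge> 1 \<Longrightarrow> sum g {1..n} = sum g {1..n-1} + (g n :: real)"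
  by (cases n) (auto simp: sum.cl_ivl_Suc)

lemma sum_even:
  fixes n :: nat
  assumes "\<And>i. odd i \<Longrightarrow> f i = (0::real)"
  shows "(\<Sum>i=1..2*n. f i) = (\<Sum>k=1..n. f (2*k))"
proof (induction n)
  case (Suc n)
  have "(\<Sum>i=1..2*Suc n. f i) = (\<Sum>i=1..2*n. f i) + f (Suc (2*n)) + f (Suc (Suc (2*n)))"
    by (simp add: sum.cl_ivl_Suc)
  also have "f (Suc (2*n)) = 0" using assms by simp
  finally show ?case using Suc by (simp add: sum.cl_ivl_Suc)
qed simp

theorem theorem2p1:
  fixes n :: nat
  assumes "n \<ge> 2"
  shows "(\<Sum>k=1..n-1. bernoulli (2*k) * bernoulli (2*n-2*k) / (real (2*k) * real (2*n-2*k)))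
           = (1 / real n) * (\<Sum>k=1..n-1. bernoulli (2*k) * bernoulli (2*n-2*k) / real (2*k) * real ((2*n) choose (2*k)))
             + bernoulli (2*n) / real n * harm (2*n)
       \<and> (1 / real n) * (\<Sum>k=1..n-1. bernoulli (2*k) * bernoulli (2*n-2*k) / real (2*k) * real ((2*n) choose (2*k)))
             + bernoulli (2*n) / real n * harm (2*n)
           = (1 / real n) * (\<Sum>k=1..n. bernoulli (2*k) * bernoulli (2*n-2*k) / real (2*k) * real ((2*n) choose (2*k)))
             + bernoulli (2*n) / real n * harm (2*n-1)"
proof -
  define B where "B = bernoulli"
  define m where "m = 2 * n"
  have n1: "n = Suc (n - 1)" using assms by simp
  have m1: "m \<ge> 1" using assms m_def by simp
  have Bodd: "B (m - 1) = 0" unfolding B_def m_def using assms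
    by (intro bernoulli_odd) auto
  have B0: "B 0 = 1" unfolding B_def by (rule bernoulli_0)
  define SA where "SA = (\<Sum>k=1..n-1. B (2*k) * B (2*n-2*k) / real (2*k))"
  define SC where "SC = (\<Sum>k=1..n-1. B (2*k) * B (2*n-2*k) / real (2*k) * real ((2*n) choose (2*k)))"
  have oddA: "B i * B (m - i) / real i = 0" if "odd i" for i
  proof (cases "i = 1")
    case True then show ?thesis using Bodd by simp
  next
    case False then have "B i = 0" unfolding B_def using that
      by (intro bernoulli_odd) (auto elim!: oddE)
    then show ?thesis by simp
  qed
  have oddC: "real (m choose i) * B i * B (m - i) / real i = 0" if "odd i" for i
    using oddA[OF that] by (auto simp: divide_simps)
  have A: "(\<Sum>i=1..m. B i * B (m - i) / real i) = SA + B m / real m"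
  proof -
    have "(\<Sum>i=1..m. B i * B (m - i) / real i) = (\<Sum>k=1..n. B (2*k) * B (m - 2*k) / real (2*k))"
      unfolding m_def by (rule sum_even) (use oddA in \<open>simp add: m_def\<close>)
    also have "\<dots> = SA + B m / real m"
      using assms by (subst sum_last) (auto simp: SA_def m_def B0)
    finally show ?thesis .
  qed
  have C: "(\<Sum>j=1..m. real (m choose j) * B j * B (m - j) / real j) = SC + B m / real m"
  proof -
    have "(\<Sum>j=1..m. real (m choose j) * B j * B (m - j) / real j) = (\<Sum>k=1..n. real (m choose (2*k)) * B (2*k) * B (m - 2*k) / real (2*k))"
      unfolding m_def by (rule sum_even) (use oddC in \<open>simp add: m_def\<close>)
    also have "\<dots> = SC + B m / real m"
      using assms by (subst sum_last) (auto simp: SC_def m_def B0 mult_ac)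
    finally show ?thesis .
  qed
  have main: "SA = SC + B m * harm m"
    using miki_full[OF m1] unfolding B_def[symmetric] A C Bodd by simp
  have LHS: "(\<Sum>k=1..n-1. B (2*k) * B (2*n-2*k) / (real (2*k) * real (2*n-2*k))) = SA / real n"
  proof -
    define h where "h = (\<lambda>k. B (2*k) * B (2*n-2*k) / real (2*k))"
    have t: "B (2*k) * B (2*n-2*k) / (real (2*k) * real (2*n-2*k)) = (h k + h (n - k)) / (2 * real n)"
      if k: "k \<in> {1..n-1}" for k
    proof -
      have e: "2*n - 2*(n-k) = 2*k" "2*(n-k) = 2*n-2*k" "real (2*n-2*k) = 2 * real n - 2 * real k" "2*n - (2*n-2*k) = 2*k"
        using k by auto
      have nz: "real n - real k \<noteq> 0" "real k \<noteq> 0" "real n \<noteq> 0" using k by auto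
      show ?thesis unfolding h_def e using nz by (simp add: field_simps e)
    qed
    have rev: "(\<Sum>k=1..n-1. h (n - k)) = SA"
    proof -
      have "(\<Sum>k=1..n-1. h k) = (\<Sum>k=1..n-1. h (n - 1 + 1 - k))" by (rule sum.atLeastAtMost_rev)
      also have "\<dots> = (\<Sum>k=1..n-1. h (n - k))"
        using assms by (intro sum.cong refl) (auto simp: Suc_diff_le)
      finally show ?thesis unfolding SA_def h_def by simp
    qed
    have "(\<Sum>k=1..n-1. B (2*k) * B (2*n-2*k) / (real (2*k) * real (2*n-2*k)))
       = (\<Sum>k=1..n-1. (h k + h (n - k)) / (2 * real n))"
      by (intro sum.cong refl t)
    also have "\<dots> = (SA + SA) / (2 * real n)"
      unfolding sum_divide_distrib[symmetric] sum.distrib rev by (simp add: SA_def h_def)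
    finally show ?thesis by simp
  qed
  have H: "harm m = harm (m - 1) + 1 / real m"
    using harm_Suc[of "m - 1"] m1 by (simp add: inverse_eq_divide)
  have SCn: "(\<Sum>k=1..n. B (2*k) * B (2*n-2*k) / real (2*k) * real ((2*n) choose (2*k))) = SC + B m / real m"
    using assms by (subst sum_last) (auto simp: SC_def m_def B0)
  have "(\<Sum>k=1..n-1. B (2*k) * B (2*n-2*k) / (real (2*k) * real (2*n-2*k)))
           = (1 / real n) * SC + B m / real n * harm m"
    unfolding LHS main by (simp add: add_divide_distrib)
  moreover have "(1 / real n) * SC + B m / real n * harm m
      = (1 / real n) * (\<Sum>k=1..n. B (2*k) * B (2*n-2*k) / real (2*k) * real ((2*n) choose (2*k)))
             + B m / real n * harm (m - 1)"
    unfolding SCn H by (simp add: add_divide_distrib distrib_left)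
  ultimately show ?thesis unfolding SC_def B_def m_def by simp
qed



end
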